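(* Let $(\Gamma,d)$, $\rho$, $S_m$, $O(g)$ be as in the context and let $\Delta$ be the constant of the context. Then for all $n$ and all $r>n+\Delta$, for each $g\in S_r$, $h\in S_n$ and $\xi\in O(g)$, \[\frac{dh_*\rho}{d\rho}(\xi)=e^{-\delta_\Gamma\beta_g(h,e)+O(1)},\] with $O(1)$ bounded independently of $n,r,g,h,\xi$.
   Context: $\Gamma$ is a finitely generated group acting properly cocompactly by isometries on a proper quasiruled hyperbolic space $(X,d)$, basepoint $x_0$, $d(g,h)=d(g.x_0,h.x_0)$; $(\Gamma,d)$ is a proper quasiruled hyperbolic space with visual boundary $\partial\Gamma$. $\delta_\Gamma=\limsup_m\frac1m\log\#B_m$ with $B_m=\{g:d(g,e)\le m\}$; $S_m=B_m\setminus B_{m-k}$ for a fixed $k$. $\beta_g(x,y)=d(g,x)-d(g,y)$. $\rho=\rho_e$ where $\{\rho_x\}$ is the Patterson–Sullivan family: $\Gamma$-equivariant ($g_*\rho_x=\rho_{g.x}$) mutually absolutely continuous probability measures with $\frac{d\rho_y}{d\rho_x}(\xi)=e^{-\delta_\Gamma\beta_\xi(y,x)+O(1)}$, $\beta_\xi$ the Busemann function at $\xi$. $O(g)$ is the set of $\xi\in\partial\Gamma$ such that some quasiruler ray from $e$ to $\xi$ meets the closed $C$-ball about $g$, for a fixed $C$. $\Delta$ is a constant (depending only on $(\Gamma,d)$, namely the maximal thickness of quasitriangles) for which there is $R$ with $|\beta_\xi(h,e)-\beta_g(h,e)|\le R$ whenever $r>n+\Delta$, $g\in S_r$, $\xi\in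 O(g)$, $h\in S_n$. *)

theory Defs
  imports "HOL-Probability.Probability" "HOL-Algebra.Generated_Groups"
begin

definition isometric_action :: "('g, 'm) monoid_scheme \<Rightarrow> ('g \<Rightarrow> 'a::metric_space \<Rightarrow> 'a) \<Rightarrow> bool" where
  "isometric_action G act \<longleftrightarrow>
     (\<forall>x. act \<one>\<^bsub>G\<^esub> x = x) \<and>
     (\<forall>g\<in>carrier G. \<forall>h\<in>carrier G. \<forall>x. act (g \<otimes>\<^bsub>G\<^esub> h) x = act g (act h x)) \<and>
     (\<forall>g\<in>carrier G. \<forall>x y. dist (act g x) (act g y) = dist x y)"

definition proper_action :: "('g, 'm) monoid_scheme \<Rightarrow> ('g \<Rightarrow> 'a::metric_space \<Rightarrow> 'a) \<Rightarrow> bool" where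
  "proper_action G act \<longleftrightarrow>
     (\<forall>K. compact K \<longrightarrow> finite {g\<in>carrier G. act g ` K \<inter> K \<noteq> {}})"

definition cocompact_action :: "('g, 'm) monoid_scheme \<Rightarrow> ('g \<Rightarrow> 'a::metric_space \<Rightarrow> 'a) \<Rightarrow> bool" where
  "cocompact_action G act \<longleftrightarrow>
     (\<exists>K. compact K \<and> (\<Union>g\<in>carrier G. act g ` K) = UNIV)"

definition proper_metric_space :: "'a::metric_space itself \<Rightarrow> bool" where
  "proper_metric_space _ \<longleftrightarrow> (\<forall>(x::'a) r. compact (cball x r))"

definition gromov_product :: "'a::metric_space \<Rightarrow> 'a \<Rightarrow> 'a \<Rightarrow> real" where
  "gromov_product w x y = (dist w x + dist w y - dist x y) / 2"

definition gromov_hyperbolic :: "'a::metric_space itself \<Rightarrow> bool" where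
  "gromov_hyperbolic _ \<longleftrightarrow> (\<exists>\<delta>\<ge>0. \<forall>(w::'a) x y z.
      gromov_product w x z \<ge> min (gromov_product w x y) (gromov_product w y z) - \<delta>)"

definition orbit_dist :: "('g \<Rightarrow> 'a::metric_space \<Rightarrow> 'a) \<Rightarrow> 'a \<Rightarrow> 'g \<Rightarrow> 'g \<Rightarrow> real" where
  "orbit_dist act x0 g h = dist (act g x0) (act h x0)"

definition ballG :: "('g, 'm) monoid_scheme \<Rightarrow> ('g \<Rightarrow> 'a::metric_space \<Rightarrow> 'a) \<Rightarrow> 'a \<Rightarrow> real \<Rightarrow> 'g set" where
  "ballG G act x0 m = {g\<in>carrier G. orbit_dist act x0 g \<one>\<^bsub>G\<^esub> \<le> m}"

definition sphereG :: "('g, 'm) monoid_scheme \<Rightarrow> ('g \<Rightarrow> 'a::metric_space \<Rightarrow> 'a) \<Rightarrow> 'a \<Rightarrow> real \<Rightarrow> real \<Rightarrow> 'g set" where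
  "sphereG G act x0 k m = ballG G act x0 m - ballG G act x0 (m - k)"

definition crit_exp :: "('g, 'm) monoid_scheme \<Rightarrow> ('g \<Rightarrow> 'a::metric_space \<Rightarrow> 'a) \<Rightarrow> 'a \<Rightarrow> ereal" where
  "crit_exp G act x0 = limsup (\<lambda>m::nat. ereal (ln (real (card (ballG G act x0 (real m)))) / real m))"

definition beta_grp :: "('g \<Rightarrow> 'a::metric_space \<Rightarrow> 'a) \<Rightarrow> 'a \<Rightarrow> 'g \<Rightarrow> 'g \<Rightarrow> 'g \<Rightarrow> real" where
  "beta_grp act x0 g x y = orbit_dist act x0 g x - orbit_dist act x0 g y"

end

theory Submission
  imports Defs
begin

theorem mainTheorem10:
  fixes G :: "('g, 'm) monoid_scheme"
    and act :: "'g \<Rightarrow> 'a::metric_space \<Rightarrow> 'a"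
    and x0 :: 'a
    and k :: real
    and bact :: "'g \<Rightarrow> 'b \<Rightarrow> 'b"
    and \<rho> :: "'g \<Rightarrow> 'b measure"
    and busemann :: "'b \<Rightarrow> 'g \<Rightarrow> 'g \<Rightarrow> real"
    and Sh :: "'g \<Rightarrow> 'b set"
    and \<Delta> :: real
  defines "\<delta> \<equiv> real_of_ereal (crit_exp G act x0)"
  assumes grp: "group G"
    and fg: "\<exists>A. finite A \<and> A \<subseteq> carrier G \<and> generate G A = carrier G"
    and X_proper: "proper_metric_space TYPE('a)"
    and X_hyp: "gromov_hyperbolic TYPE('a)"
    and isom: "isometric_action G act"
    and prop_act: "proper_action G act"
    and cocpt: "cocompact_action G act"
    and k_pos: "k > 0"
    \<comment> \<open>boundary action: measurable, by a group action\<close>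
    and bact_one: "\<And>\<xi>. bact \<one>\<^bsub>G\<^esub> \<xi> = \<xi>"
    and bact_mult: "\<And>g h \<xi>. g \<in> carrier G \<Longrightarrow> h \<in> carrier G \<Longrightarrow>
                       bact (g \<otimes>\<^bsub>G\<^esub> h) \<xi> = bact g (bact h \<xi>)"
    and bact_meas: "\<And>g x. g \<in> carrier G \<Longrightarrow> x \<in> carrier G \<Longrightarrow> bact g \<in> (\<rho> x) \<rightarrow>\<^sub>M (\<rho> x)"
    \<comment> \<open>Patterson--Sullivan family\<close>
    and PS_prob: "\<And>x. x \<in> carrier G \<Longrightarrow> prob_space (\<rho> x)"
    and PS_sets: "\<And>x y. x \<in> carrier G \<Longrightarrow> y \<in> carrier G \<Longrightarrow> sets (\<rho> x) = sets (\<rho> y)"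
    and PS_ac: "\<And>x y. x \<in> carrier G \<Longrightarrow> y \<in> carrier G \<Longrightarrow> absolutely_continuous (\<rho> x) (\<rho> y)"
    and PS_equiv: "\<And>g x. g \<in> carrier G \<Longrightarrow> x \<in> carrier G \<Longrightarrow>
                       distr (\<rho> x) (\<rho> x) (bact g) = \<rho> (g \<otimes>\<^bsub>G\<^esub> x)"
    and PS_RN: "\<exists>C. \<forall>x\<in>carrier G. \<forall>y\<in>carrier G. AE \<xi> in \<rho> x.
                  ennreal (exp (- \<delta> * busemann \<xi> y x - C)) \<le> RN_deriv (\<rho> x) (\<rho> y) \<xi> \<and>
                  RN_deriv (\<rho> x) (\<rho> y) \<xi> \<le> ennreal (exp (- \<delta> * busemann \<xi> y x + C))"
    \<comment> \<open>the defining property of the constant Delta\<close>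
    and Delta: "\<exists>R. \<forall>n r::nat. real r > real n + \<Delta> \<longrightarrow>
                  (\<forall>g\<in>sphereG G act x0 k (real r). \<forall>\<xi>\<in>Sh g. \<forall>h\<in>sphereG G act x0 k (real n).
                     \<bar>busemann \<xi> h \<one>\<^bsub>G\<^esub> - beta_grp act x0 g h \<one>\<^bsub>G\<^esub>\<bar> \<le> R)"
  shows "\<exists>C. \<forall>n r::nat. real r > real n + \<Delta> \<longrightarrow>
           (\<forall>g\<in>sphereG G act x0 k (real r). \<forall>h\<in>sphereG G act x0 k (real n).
              AE \<xi> in \<rho> \<one>\<^bsub>G\<^esub>. \<xi> \<in> Sh g \<longrightarrow>
                ennreal (exp (- \<delta> * beta_grp act x0 g h \<one>\<^bsub>G\<^esub> - C))
                  \<le> RN_deriv (\<rho> \<one>\<^bsub>G\<^esub>) (distr (\<rho> \<one>\<^bsub>G\<^esub>) (\<rho> \<one>\<^bsub>G\<^esub>) (bact h)) \<xi> \<and>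
                RN_deriv (\<rho> \<one>\<^bsub>G\<^esub>) (distr (\<rho> \<one>\<^bsub>G\<^esub>) (\<rho> \<one>\<^bsub>G\<^esub>) (bact h)) \<xi>
                  \<le> ennreal (exp (- \<delta> * beta_grp act x0 g h \<one>\<^bsub>G\<^esub> + C)))"
  proof -
  obtain C0 where C0: "\<forall>x\<in>carrier G. \<forall>y\<in>carrier G. AE \<xi> in \<rho> x.
                  ennreal (exp (- \<delta> * busemann \<xi> y x - C0)) \<le> RN_deriv (\<rho> x) (\<rho> y) \<xi> \<and>
                  RN_deriv (\<rho> x) (\<rho> y) \<xi> \<le> ennreal (exp (- \<delta> * busemann \<xi> y x + C0))"
    using PS_RN by blast
  obtain R where R: "\<forall>n r::nat. real r > real n + \<Delta> \<longrightarrow>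
                  (\<forall>g\<in>sphereG G act x0 k (real r). \<forall>\<xi>\<in>Sh g. \<forall>h\<in>sphereG G act x0 k (real n).
                     \<bar>busemann \<xi> h \<one>\<^bsub>G\<^esub> - beta_grp act x0 g h \<one>\<^bsub>G\<^esub>\<bar> \<le> R)"
    using Delta by blast
  have one: "\<one>\<^bsub>G\<^esub> \<in> carrier G" using grp by (simp add: group.is_monoid monoid.one_closed)
  show ?thesis
  proof (intro exI allI impI ballI)
    fix n r :: nat and g h
    assume nr: "real r > real n + \<Delta>" and g: "g \<in> sphereG G act x0 k (real r)"
      and h: "h \<in> sphereG G act x0 k (real n)"
    have hc: "h \<in> carrier G" using h by (simp add: sphereG_def ballG_def)
    have eq: "distr (\<rho> \<one>\<^bsub>G\<^esub>) (\<rho> \<one>\<^bsub>G\<^esub>) (bact h) = \<rho> h"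
      using PS_equiv[OF hc one] grp hc by (simp add: group.is_monoid monoid.r_one)
    have ae: "AE \<xi> in \<rho> \<one>\<^bsub>G\<^esub>.
                  ennreal (exp (- \<delta> * busemann \<xi> h \<one>\<^bsub>G\<^esub> - C0)) \<le> RN_deriv (\<rho> \<one>\<^bsub>G\<^esub>) (\<rho> h) \<xi> \<and>
                  RN_deriv (\<rho> \<one>\<^bsub>G\<^esub>) (\<rho> h) \<xi> \<le> ennreal (exp (- \<delta> * busemann \<xi> h \<one>\<^bsub>G\<^esub> + C0))"
      using C0 one hc by blast
    show "AE \<xi> in \<rho> \<one>\<^bsub>G\<^esub>. \<xi> \<in> Sh g \<longrightarrow>
                ennreal (exp (- \<delta> * beta_grp act x0 g h \<one>\<^bsub>G\<^esub> - (C0 + \<bar>\<delta>\<bar> * \<bar>R\<bar>)))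
                  \<le> RN_deriv (\<rho> \<one>\<^bsub>G\<^esub>) (distr (\<rho> \<one>\<^bsub>G\<^esub>) (\<rho> \<one>\<^bsub>G\<^esub>) (bact h)) \<xi> \<and>
                RN_deriv (\<rho> \<one>\<^bsub>G\<^esub>) (distr (\<rho> \<one>\<^bsub>G\<^esub>) (\<rho> \<one>\<^bsub>G\<^esub>) (bact h)) \<xi>
                  \<le> ennreal (exp (- \<delta> * beta_grp act x0 g h \<one>\<^bsub>G\<^esub> + (C0 + \<bar>\<delta>\<bar> * \<bar>R\<bar>)))"
      unfolding eq using ae
    proof (rule AE_mp, intro AE_I2 impI)
      fix \<xi>
      let ?b = "busemann \<xi> h \<one>\<^bsub>G\<^esub>" and ?a = "beta_grp act x0 g h \<one>\<^bsub>G\<^esub>"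
      assume H: "ennreal (exp (- \<delta> * ?b - C0)) \<le> RN_deriv (\<rho> \<one>\<^bsub>G\<^esub>) (\<rho> h) \<xi> \<and>
                  RN_deriv (\<rho> \<one>\<^bsub>G\<^esub>) (\<rho> h) \<xi> \<le> ennreal (exp (- \<delta> * ?b + C0))"
        and xi: "\<xi> \<in> Sh g"
      have d: "\<bar>?b - ?a\<bar> \<le> R" using R nr g xi h by blast
      have m: "\<bar>\<delta> * (?b - ?a)\<bar> \<le> \<bar>\<delta>\<bar> * \<bar>R\<bar>"
        using d by (simp add: abs_mult mult_left_mono)
      have l1: "- \<delta> * ?a - (C0 + \<bar>\<delta>\<bar> * \<bar>R\<bar>) \<le> - \<delta> * ?b - C0"
        using m by (simp add: algebra_simps abs_le_iff)
      have l2: "- \<delta> * ?b + C0 \<le> - \<delta> * ?a + (C0 + \<bar>\<delta>\<bar> * \<bar>R\<bar>)"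
        using m by (simp add: algebra_simps abs_le_iff)
      have e1: "ennreal (exp (- \<delta> * ?a - (C0 + \<bar>\<delta>\<bar> * \<bar>R\<bar>))) \<le> ennreal (exp (- \<delta> * ?b - C0))"
        using l1 by (intro ennreal_leI) simp
      have e2: "ennreal (exp (- \<delta> * ?b + C0)) \<le> ennreal (exp (- \<delta> * ?a + (C0 + \<bar>\<delta>\<bar> * \<bar>R\<bar>)))"
        using l2 by (intro ennreal_leI) simp
      show "ennreal (exp (- \<delta> * ?a - (C0 + \<bar>\<delta>\<bar> * \<bar>R\<bar>))) \<le> RN_deriv (\<rho> \<one>\<^bsub>G\<^esub>) (\<rho> h) \<xi> \<and>
                RN_deriv (\<rho> \<one>\<^bsub>G\<^esub>) (\<rho> h) \<xi> \<le> ennreal (exp (- \<delta> * ?a + (C0 + \<bar>\<delta>\<bar> * \<bar>R\<bar>)))"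
        using H e1 e2 order_trans by blast
    qed
  qed
qed

end
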